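(* Assume the well-posedness and controllability assumptions below. For $\theta\in\mathcal{N}$ define $\ell_N(\theta):=\mathbb{E}\big[\ell(x_s^{\mathrm{bet}(\theta_{N-1})},\bar u_s^{\mathrm{bet}(\theta_{N-1}),\theta_N},\theta_N)\mid\theta_0=\theta\big]$, and for the closed-loop system $x_{k+1}=f(x_k,\kappa_N(x_k,\theta_k),\theta_k)$ define $\mathcal{L}V_N^\star(x_k,\theta_k):=\mathbb{E}[V_N^\star(x_{k+1},\theta_{k+1})-V_N^\star(x_k,\theta_k)\mid\mathfrak{F}_k]$. Then for all $(x_k,\theta_k)\in X_N$, $$\mathcal{L}V_N^\star(x_k,\theta_k)\le \ell_N(\theta_k)-\ell(x_k,\kappa_N(x_k,\theta_k),\theta_k).$$
   Context: Let $\mathcal{N}=\{1,\dots,\nu\}$ and let $\{\theta_k\}_{k\ge 0}$ be a time-homogeneous Markov chain on $\mathcal{N}$ with transition matrix $P=(p_{ij})$ and initial distribution $v$, defined on a filtered probability space $(\Omega,\mathfrak{F},\{\mathfrak{F}_k\}_k,\mathbb{P})$, where $\mathfrak{F}_k$ is the $\sigma$-algebra generated by the history of states, inputs and modes up to time $k$. The system is $x_{k+1}=f(x_k,u_k,\theta_k)$ with $x_k\in\mathbb{R}^n$, $u_k\in\mathbb{R}^m$; at time $k$ both $x_k$ and $\theta_k$ are measured. Constraints: $(x_k,u_k)\in Y_{\theta_k}$. Stage cost $\ell:\mathbb{R}^n\times\mathbb{R}^m\times\mathcal{N}\to\mathbb{R}$. $u\lhd\mathfrak{F}_k$ means $u$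 is $\mathfrak{F}_k$-measurable. Cover: $\mathcal{C}(i)=\{j: p_{ij}>0\}$; bet node: some $\mathrm{bet}(i)\in\mathcal{C}(i)$ with $p_{i\,\mathrm{bet}(i)}\ge p_{ij}$ for all $j\in\mathcal{C}(i)$. Well-posedness assumption: for each $\theta$, $\ell(\cdot,\cdot,\theta)$ is nonnegative, lower semicontinuous and level-bounded in $u$ locally uniformly in $x$; $f(\cdot,\cdot,\theta)$ is continuous; $Y_\theta$ is nonempty and compact; $\{\theta_k\}$ is irreducible and aperiodic. Optimal steady states: $(x_s^\theta,u_s^\theta)$ minimizes $\ell(x,u,\theta)$ subject to $f(x,u,\theta)=x$, $(x,u)\in Y_\theta$. Controllability assumption: for all $i,j\in\mathcal{N}$ there is $\bar u_s^{i,j}$ with $(x_s^i,\bar u_s^{i,j})\in Y_j$ and $f(x_s^i,\bar u_s^{i,j},j)=x_s^{\mathrm{bet}(j)}$. EMPC problem $\mathbb{P}(x,\theta)$: $V_N^\star(x,\theta)=\inf_{\mathbf{u}_N}\mathbb{E}[\sum_{j=0}^{N-1}\ell(x_j,u_j,\theta_j)\mid\mathfrak{F}_0]$ subject to, for $k=0,\dots,N-1$: $x_{k+1}=f(x_k,u_k,\theta_k)$, $(x_k,u_k)\in Y_{\theta_k}$, $(x_0,\theta_0)=(x,\theta)$, $x_N=x_s^{\mathrm{bet}(\theta_{N-1})}$, $u_k\lhd\mathfrak{F}_k$. $X_N$ is the set of $(x,\theta)$ for which it is feasible; $\kappa_N(x,\theta)=u_0^\star(x,\theta)$ is the first element of an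 optimal policy. *)

theory Defs
  imports "HOL-Analysis.Analysis"
begin

(* Modes: a finite type 'q (playing the role of N = {1..nu}).
   Transition matrix P :: 'q => 'q => real, P i j = p_ij. *)

definition stochastic_matrix :: "('q::finite \<Rightarrow> 'q \<Rightarrow> real) \<Rightarrow> bool" where
  "stochastic_matrix P \<longleftrightarrow> (\<forall>i j. 0 \<le> P i j) \<and> (\<forall>i. (\<Sum>j\<in>UNIV. P i j) = 1)"

fun mpow :: "('q::finite \<Rightarrow> 'q \<Rightarrow> real) \<Rightarrow> nat \<Rightarrow> 'q \<Rightarrow> 'q \<Rightarrow> real" where
  "mpow P 0 i j = (if i = j then 1 else 0)"
| "mpow P (Suc n) i j = (\<Sum>k\<in>UNIV. mpow P n i k * P k j)"

definition irreducible_chain :: "('q::finite \<Rightarrow> 'q \<Rightarrow> real) \<Rightarrow> bool" where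
  "irreducible_chain P \<longleftrightarrow> (\<forall>i j. \<exists>n. mpow P n i j > 0)"

definition aperiodic_chain :: "('q::finite \<Rightarrow> 'q \<Rightarrow> real) \<Rightarrow> bool" where
  "aperiodic_chain P \<longleftrightarrow> (\<forall>i. Gcd {n. n \<ge> 1 \<and> mpow P n i i > 0} = 1)"

definition cover :: "('q \<Rightarrow> 'q \<Rightarrow> real) \<Rightarrow> 'q \<Rightarrow> 'q set" where
  "cover P i = {j. P i j > 0}"

definition is_bet :: "('q \<Rightarrow> 'q \<Rightarrow> real) \<Rightarrow> ('q \<Rightarrow> 'q) \<Rightarrow> bool" where
  "is_bet P bet \<longleftrightarrow> (\<forall>i. bet i \<in> cover P i \<and> (\<forall>j\<in>cover P i. P i j \<le> P i (bet i)))"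

definition lsc :: "('a::topological_space \<Rightarrow> real) \<Rightarrow> bool" where
  "lsc g \<longleftrightarrow> (\<forall>z0 a. a < g z0 \<longrightarrow> eventually (\<lambda>z. a < g z) (nhds z0))"

(* level-boundedness in u locally uniformly in x (Rockafellar--Wets, Def. 1.16) *)
definition level_bounded_loc_unif ::
  "('x::metric_space \<Rightarrow> 'u::metric_space \<Rightarrow> real) \<Rightarrow> bool" where
  "level_bounded_loc_unif g \<longleftrightarrow>
     (\<forall>x0 a. \<exists>V. open V \<and> x0 \<in> V \<and> bounded (\<Union>x\<in>V. {u. g x u \<le> a}))"

definition well_posed ::
  "('q::finite \<Rightarrow> 'q \<Rightarrow> real) \<Rightarrow> ('x::metric_space \<Rightarrow> 'u::metric_space \<Rightarrow> 'q \<Rightarrow> 'x)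
   \<Rightarrow> ('x \<Rightarrow> 'u \<Rightarrow> 'q \<Rightarrow> real) \<Rightarrow> ('q \<Rightarrow> ('x \<times> 'u) set) \<Rightarrow> bool" where
  "well_posed P f ell Y \<longleftrightarrow>
     (\<forall>\<theta>. (\<forall>x u. 0 \<le> ell x u \<theta>)
        \<and> lsc (\<lambda>(x, u). ell x u \<theta>)
        \<and> level_bounded_loc_unif (\<lambda>x u. ell x u \<theta>)
        \<and> continuous_on UNIV (\<lambda>(x, u). f x u \<theta>)
        \<and> Y \<theta> \<noteq> {} \<and> compact (Y \<theta>))
     \<and> irreducible_chain P \<and> aperiodic_chain P"

definition optimal_steady_states ::
  "('x \<Rightarrow> 'u \<Rightarrow> 'q \<Rightarrow> 'x) \<Rightarrow> ('x \<Rightarrow> 'u \<Rightarrow> 'q \<Rightarrow> real) \<Rightarrow> ('q \<Rightarrow> ('x \<times> 'u) set)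
   \<Rightarrow> ('q \<Rightarrow> 'x) \<Rightarrow> ('q \<Rightarrow> 'u) \<Rightarrow> bool" where
  "optimal_steady_states f ell Y xs us \<longleftrightarrow>
     (\<forall>\<theta>. f (xs \<theta>) (us \<theta>) \<theta> = xs \<theta> \<and> (xs \<theta>, us \<theta>) \<in> Y \<theta> \<and>
        (\<forall>x u. f x u \<theta> = x \<and> (x, u) \<in> Y \<theta> \<longrightarrow> ell (xs \<theta>) (us \<theta>) \<theta> \<le> ell x u \<theta>))"

definition controllable ::
  "('x \<Rightarrow> 'u \<Rightarrow> 'q \<Rightarrow> 'x) \<Rightarrow> ('q \<Rightarrow> ('x \<times> 'u) set) \<Rightarrow> ('q \<Rightarrow> 'q)
   \<Rightarrow> ('q \<Rightarrow> 'x) \<Rightarrow> ('q \<Rightarrow> 'q \<Rightarrow> 'u) \<Rightarrow> bool" where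
  "controllable f Y bet xs ubar \<longleftrightarrow>
     (\<forall>i j. (xs i, ubar i j) \<in> Y j \<and> f (xs i) (ubar i j) j = xs (bet j))"

definition paths :: "'q \<Rightarrow> nat \<Rightarrow> 'q list set" where
  "paths \<theta> n = {ws. length ws = n \<and> ws ! 0 = \<theta>}"

definition path_prob :: "('q \<Rightarrow> 'q \<Rightarrow> real) \<Rightarrow> 'q list \<Rightarrow> real" where
  "path_prob P ws = (\<Prod>k<length ws - 1. P (ws ! k) (ws ! Suc k))"

(* A policy mu maps a mode history [theta_0,...,theta_k] to the input u_k; this is
   exactly an F_k-measurable input (x_0 is given and states/inputs are determined by
   the mode history).  state f x mu ws k = x_k along the mode path ws. *)
fun state :: "('x \<Rightarrow> 'u \<Rightarrow> 'q \<Rightarrow> 'x) \<Rightarrow> 'x \<Rightarrow> ('q list \<Rightarrow> 'u) \<Rightarrow> 'q list \<Rightarrow> nat \<Rightarrow> 'x" where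
  "state f x mu ws 0 = x"
| "state f x mu ws (Suc k) = f (state f x mu ws k) (mu (take (Suc k) ws)) (ws ! k)"

(* feasibility for P(x,theta): constraints and terminal constraint hold almost surely,
   i.e. along every mode path of positive probability *)
definition feasible ::
  "('q \<Rightarrow> 'q \<Rightarrow> real) \<Rightarrow> ('x \<Rightarrow> 'u \<Rightarrow> 'q \<Rightarrow> 'x) \<Rightarrow> ('q \<Rightarrow> ('x \<times> 'u) set) \<Rightarrow> ('q \<Rightarrow> 'q)
   \<Rightarrow> ('q \<Rightarrow> 'x) \<Rightarrow> nat \<Rightarrow> 'x \<Rightarrow> 'q \<Rightarrow> ('q list \<Rightarrow> 'u) \<Rightarrow> bool" where
  "feasible P f Y bet xs N x \<theta> mu \<longleftrightarrow>
     (\<forall>ws\<in>paths \<theta> N. path_prob P ws > 0 \<longrightarrow>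
        (\<forall>k<N. (state f x mu ws k, mu (take (Suc k) ws)) \<in> Y (ws ! k))
        \<and> state f x mu ws N = xs (bet (ws ! (N - 1))))"

definition cost ::
  "('q::finite \<Rightarrow> 'q \<Rightarrow> real) \<Rightarrow> ('x \<Rightarrow> 'u \<Rightarrow> 'q \<Rightarrow> 'x) \<Rightarrow> ('x \<Rightarrow> 'u \<Rightarrow> 'q \<Rightarrow> real)
   \<Rightarrow> nat \<Rightarrow> 'x \<Rightarrow> 'q \<Rightarrow> ('q list \<Rightarrow> 'u) \<Rightarrow> real" where
  "cost P f ell N x \<theta> mu =
     (\<Sum>ws\<in>paths \<theta> N. path_prob P ws *
        (\<Sum>k<N. ell (state f x mu ws k) (mu (take (Suc k) ws)) (ws ! k)))"

definition Vopt ::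
  "('q::finite \<Rightarrow> 'q \<Rightarrow> real) \<Rightarrow> ('x \<Rightarrow> 'u \<Rightarrow> 'q \<Rightarrow> 'x) \<Rightarrow> ('x \<Rightarrow> 'u \<Rightarrow> 'q \<Rightarrow> real)
   \<Rightarrow> ('q \<Rightarrow> ('x \<times> 'u) set) \<Rightarrow> ('q \<Rightarrow> 'q) \<Rightarrow> ('q \<Rightarrow> 'x) \<Rightarrow> nat \<Rightarrow> 'x \<Rightarrow> 'q \<Rightarrow> real" where
  "Vopt P f ell Y bet xs N x \<theta> =
     Inf {cost P f ell N x \<theta> mu | mu. feasible P f Y bet xs N x \<theta> mu}"

definition XN ::
  "('q \<Rightarrow> 'q \<Rightarrow> real) \<Rightarrow> ('x \<Rightarrow> 'u \<Rightarrow> 'q \<Rightarrow> 'x) \<Rightarrow> ('q \<Rightarrow> ('x \<times> 'u) set) \<Rightarrow> ('q \<Rightarrow> 'q)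
   \<Rightarrow> ('q \<Rightarrow> 'x) \<Rightarrow> nat \<Rightarrow> ('x \<times> 'q) set" where
  "XN P f Y bet xs N = {(x, \<theta>). \<exists>mu. feasible P f Y bet xs N x \<theta> mu}"

definition optimal_policy ::
  "('q::finite \<Rightarrow> 'q \<Rightarrow> real) \<Rightarrow> ('x \<Rightarrow> 'u \<Rightarrow> 'q \<Rightarrow> 'x) \<Rightarrow> ('x \<Rightarrow> 'u \<Rightarrow> 'q \<Rightarrow> real)
   \<Rightarrow> ('q \<Rightarrow> ('x \<times> 'u) set) \<Rightarrow> ('q \<Rightarrow> 'q) \<Rightarrow> ('q \<Rightarrow> 'x) \<Rightarrow> nat \<Rightarrow> 'x \<Rightarrow> 'q
   \<Rightarrow> ('q list \<Rightarrow> 'u) \<Rightarrow> bool" where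
  "optimal_policy P f ell Y bet xs N x \<theta> mu \<longleftrightarrow>
     feasible P f Y bet xs N x \<theta> mu \<and> cost P f ell N x \<theta> mu = Vopt P f ell Y bet xs N x \<theta>"

definition ellN ::
  "('q::finite \<Rightarrow> 'q \<Rightarrow> real) \<Rightarrow> ('x \<Rightarrow> 'u \<Rightarrow> 'q \<Rightarrow> real) \<Rightarrow> ('q \<Rightarrow> 'q) \<Rightarrow> ('q \<Rightarrow> 'x)
   \<Rightarrow> ('q \<Rightarrow> 'q \<Rightarrow> 'u) \<Rightarrow> nat \<Rightarrow> 'q \<Rightarrow> real" where
  "ellN P ell bet xs ubar N \<theta> =
     (\<Sum>ws\<in>paths \<theta> (Suc N). path_prob P ws *
        ell (xs (bet (ws ! (N - 1)))) (ubar (bet (ws ! (N - 1))) (ws ! N)) (ws ! N))"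

definition LV ::
  "('q::finite \<Rightarrow> 'q \<Rightarrow> real) \<Rightarrow> ('x \<Rightarrow> 'u \<Rightarrow> 'q \<Rightarrow> 'x) \<Rightarrow> ('x \<Rightarrow> 'q \<Rightarrow> real)
   \<Rightarrow> 'u \<Rightarrow> 'x \<Rightarrow> 'q \<Rightarrow> real" where
  "LV P f V kappa x \<theta> = (\<Sum>j\<in>UNIV. P \<theta> j * V (f x kappa \<theta>) j) - V x \<theta>"

end

theory Submission
  imports Defs
begin

lemma finite_paths: "finite (paths (\<theta>::'q::finite) n)"
proof -
  have "paths \<theta> n \<subseteq> {ws. set ws \<subseteq> UNIV \<and> length ws = n}" by (auto simp: paths_def)
  moreover have "finite {ws. set ws \<subseteq> (UNIV::'q set) \<and> length ws = n}"
    by (rule finite_lists_length_eq) simp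
  ultimately show ?thesis by (rule finite_subset)
qed

lemma pp_Cons: "ws \<noteq> [] \<Longrightarrow> path_prob P (a # ws) = P a (ws ! 0) * path_prob P ws"
proof -
  assume "ws \<noteq> []"
  then obtain m where m: "length ws = Suc m" by (cases ws) auto
  show ?thesis unfolding path_prob_def using m
    by (simp add: prod.lessThan_Suc_shift del: prod.lessThan_Suc)
qed

lemma pp_snoc: "ws \<noteq> [] \<Longrightarrow> path_prob P (ws @ [a]) = path_prob P ws * P (last ws) a"
proof -
  assume ne: "ws \<noteq> []"
  then obtain m where m: "length ws = Suc m" by (cases ws) auto
  have "path_prob P (ws @ [a]) = (\<Prod>k<Suc m. P ((ws@[a]) ! k) ((ws@[a]) ! Suc k))"
    unfolding path_prob_def using m by simp
  also have "\<dots> = (\<Prod>k<m. P ((ws@[a]) ! k) ((ws@[a]) ! Suc k)) * P ((ws@[a]) ! m) ((ws@[a]) ! Suc m)"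
    by simp
  also have "(\<Prod>k<m. P ((ws@[a]) ! k) ((ws@[a]) ! Suc k)) = (\<Prod>k<m. P (ws ! k) (ws ! Suc k))"
    by (rule prod.cong) (auto simp: nth_append m)
  also have "P ((ws@[a]) ! m) ((ws@[a]) ! Suc m) = P (last ws) a"
    using m ne by (simp add: nth_append last_conv_nth)
  finally show ?thesis unfolding path_prob_def using m by simp
qed

lemma pp_nonneg: "(\<forall>i j. 0 \<le> P i j) \<Longrightarrow> 0 \<le> path_prob P ws"
  by (simp add: path_prob_def prod_nonneg)

lemma paths_Cons_image:
  assumes "n \<ge> 1"
  shows "paths \<theta> (Suc n) = (\<lambda>(j,ws'). \<theta>#ws') ` (SIGMA j:UNIV. paths j n)"
proof
  show "paths \<theta> (Suc n) \<subseteq> (\<lambda>(j,ws'). \<theta>#ws') ` (SIGMA j:UNIV. paths j n)"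
  proof
    fix ws assume "ws \<in> paths \<theta> (Suc n)"
    then have l: "length ws = Suc n" and h: "ws ! 0 = \<theta>" by (auto simp: paths_def)
    then obtain a r where ws: "ws = a # r" by (cases ws) auto
    with l h have "a = \<theta>" "length r = n" by auto
    then have "ws = (\<lambda>(j,ws'). \<theta>#ws') (r!0, r)" "(r!0, r) \<in> (SIGMA j:UNIV. paths j n)"
      using ws by (auto simp: paths_def)
    then show "ws \<in> (\<lambda>(j,ws'). \<theta>#ws') ` (SIGMA j:UNIV. paths j n)" by blast
  qed
next
  show "(\<lambda>(j,ws'). \<theta>#ws') ` (SIGMA j:UNIV. paths j n) \<subseteq> paths \<theta> (Suc n)"
    by (auto simp: paths_def)
qed

lemma sum_paths_Cons:
  assumes "n \<ge> 1"
  shows "(\<Sum>ws\<in>paths (\<theta>::'q::finite) (Suc n). path_prob P ws * g ws)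
       = (\<Sum>j\<in>UNIV. P \<theta> j * (\<Sum>ws\<in>paths j n. path_prob P ws * g (\<theta>#ws)))"
proof -
  have inj: "inj_on (\<lambda>(j,ws'). \<theta>#ws') (SIGMA j:UNIV. paths (j::'q::finite) n)"
    by (auto simp: inj_on_def paths_def)
  have "(\<Sum>ws\<in>paths \<theta> (Suc n). path_prob P ws * g ws)
      = (\<Sum>p\<in>(SIGMA j:UNIV. paths j n). path_prob P (\<theta> # snd p) * g (\<theta> # snd p))"
    unfolding paths_Cons_image[OF assms] by (subst sum.reindex[OF inj]) (simp add: case_prod_beta)
  also have "\<dots> = (\<Sum>j\<in>UNIV. \<Sum>ws\<in>paths j n. path_prob P (\<theta> # ws) * g (\<theta> # ws))"
    using sum.Sigma[of UNIV "\<lambda>j. paths j n" "\<lambda>j (ws::'q list). path_prob P (\<theta>#ws) * g (\<theta>#ws)"]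
    by (simp add: case_prod_beta finite_paths)
  also have "\<dots> = (\<Sum>j\<in>UNIV. \<Sum>ws\<in>paths j n. P \<theta> j * (path_prob P ws * g (\<theta> # ws)))"
  proof (rule sum.cong[OF refl], rule sum.cong[OF refl])
    fix j :: 'q and ws :: "'q list" assume "ws \<in> paths j n"
    then have "ws \<noteq> []" "ws ! 0 = j" using assms by (auto simp: paths_def)
    then show "path_prob P (\<theta> # ws) * g (\<theta> # ws) = P \<theta> j * (path_prob P ws * g (\<theta> # ws))"
      by (simp add: pp_Cons)
  qed
  also have "\<dots> = (\<Sum>j\<in>UNIV. P \<theta> j * (\<Sum>ws\<in>paths j n. path_prob P ws * g (\<theta>#ws)))"
    by (simp add: sum_distrib_left)
  finally show ?thesis .
qed

lemma paths_snoc_image: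
  assumes "m \<ge> 1"
  shows "paths \<theta> (Suc m) = (\<lambda>(ws,a). ws@[a]) ` (paths \<theta> m \<times> UNIV)"
proof
  show "paths \<theta> (Suc m) \<subseteq> (\<lambda>(ws,a). ws@[a]) ` (paths \<theta> m \<times> UNIV)"
  proof
    fix ws assume "ws \<in> paths \<theta> (Suc m)"
    then have l: "length ws = Suc m" and h: "ws ! 0 = \<theta>" by (auto simp: paths_def)
    then have ne: "ws \<noteq> []" by auto
    have e: "ws = butlast ws @ [last ws]" using ne by simp
    have "butlast ws ! 0 = \<theta>" using h l assms by (simp add: nth_butlast)
    then have "(butlast ws, last ws) \<in> paths \<theta> m \<times> UNIV" using l by (auto simp: paths_def)
    then show "ws \<in> (\<lambda>(ws,a). ws@[a]) ` (paths \<theta> m \<times> UNIV)" using e by force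
  qed
next
  show "(\<lambda>(ws,a). ws@[a]) ` (paths \<theta> m \<times> UNIV) \<subseteq> paths \<theta> (Suc m)"
    using assms by (auto simp: paths_def nth_append)
qed

lemma sum_paths_snoc:
  assumes "m \<ge> 1" and st: "\<forall>i. (\<Sum>j\<in>UNIV. P i j) = (1::real)"
  shows "(\<Sum>ws\<in>paths (\<theta>::'q::finite) (Suc m). path_prob P ws * h (take m ws))
       = (\<Sum>ws\<in>paths \<theta> m. path_prob P ws * h ws)"
proof -
  have inj: "inj_on (\<lambda>(ws,a). ws@[a]) (paths \<theta> m \<times> (UNIV::'q set))"
    by (auto simp: inj_on_def paths_def)
  have "(\<Sum>ws\<in>paths \<theta> (Suc m). path_prob P ws * h (take m ws))
      = (\<Sum>p\<in>paths \<theta> m \<times> UNIV. path_prob P (fst p @ [snd p]) * h (take m (fst p @ [snd p])))"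
    unfolding paths_snoc_image[OF assms(1)] by (subst sum.reindex[OF inj]) (simp add: case_prod_beta)
  also have "\<dots> = (\<Sum>ws\<in>paths \<theta> m. \<Sum>a\<in>UNIV. path_prob P (ws @ [a]) * h (take m (ws @ [a])))"
    using sum.cartesian_product[of "\<lambda>ws a. path_prob P (ws @ [a]) * h (take m (ws @ [a]))" "UNIV" "paths \<theta> m"]
    by (simp add: case_prod_beta)
  also have "\<dots> = (\<Sum>ws\<in>paths \<theta> m. path_prob P ws * h ws)"
  proof (rule sum.cong[OF refl])
    fix ws assume "ws \<in> paths \<theta> m"
    then have l: "length ws = m" and ne: "ws \<noteq> []" using assms(1) by (auto simp: paths_def)
    have "(\<Sum>a\<in>UNIV. path_prob P (ws @ [a]) * h (take m (ws @ [a])))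
        = (\<Sum>a\<in>UNIV. path_prob P ws * h ws * P (last ws) a)"
      using l ne by (simp add: pp_snoc mult_ac)
    also have "\<dots> = path_prob P ws * h ws * (\<Sum>a\<in>UNIV. P (last ws) a)"
      by (simp add: sum_distrib_left)
    also have "\<dots> = path_prob P ws * h ws" using st by simp
    finally show "(\<Sum>a\<in>UNIV. path_prob P (ws @ [a]) * h (take m (ws @ [a]))) = path_prob P ws * h ws" .
  qed
  finally show ?thesis .
qed

lemma sum_pp_1:
  assumes "m \<ge> 1" and st: "\<forall>i. (\<Sum>j\<in>UNIV. P i j) = (1::real)"
  shows "(\<Sum>ws\<in>paths (\<theta>::'q::finite) m. path_prob P ws) = 1"
  using assms(1)
proof (induction m rule: dec_induct)
  case base
  have "paths \<theta> 1 = {[\<theta>]}"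
  proof
    show "paths \<theta> 1 \<subseteq> {[\<theta>]}"
    proof
      fix ws assume "ws \<in> paths \<theta> 1"
      then have "length ws = 1" "ws ! 0 = \<theta>" by (auto simp: paths_def)
      then show "ws \<in> {[\<theta>]}" by (cases ws) auto
    qed
  qed (auto simp: paths_def)
  then show ?case by (simp add: path_prob_def)
next
  case (step m)
  have "(\<Sum>ws\<in>paths \<theta> (Suc m). path_prob P ws * (\<lambda>_. 1) (take m ws))
      = (\<Sum>ws\<in>paths \<theta> m. path_prob P ws * (\<lambda>_. 1) ws)"
    by (rule sum_paths_snoc[OF step(1) st])
  then show ?case using step by simp
qed

lemma state_shift:
  assumes mu': "\<forall>h. length h < Suc n \<longrightarrow> mu' h = mu (\<theta>#h)"
    and l: "length ws' = Suc n"
  shows "k < Suc n \<Longrightarrow> state f (f x (mu [\<theta>]) \<theta>) mu' ws' k = state f x mu (\<theta> # take n ws') (Suc k)"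
proof (induction k)
  case 0
  then show ?case by simp
next
  case (Suc k)
  then have k: "k < n" by simp
  have "mu' (take (Suc k) ws') = mu (\<theta> # take (Suc k) ws')" using mu' l k by simp
  moreover have "take (Suc (Suc k)) (\<theta> # take n ws') = \<theta> # take (Suc k) ws'" using k by simp
  moreover have "(\<theta> # take n ws') ! Suc k = ws' ! k" using k by simp
  ultimately show ?case using Suc k by simp
qed

theorem lemma1:
  fixes P :: "'q::finite \<Rightarrow> 'q \<Rightarrow> real"
    and f :: "real^'n \<Rightarrow> real^'m \<Rightarrow> 'q \<Rightarrow> real^'n"
    and ell :: "real^'n \<Rightarrow> real^'m \<Rightarrow> 'q \<Rightarrow> real"
    and Y :: "'q \<Rightarrow> ((real^'n) \<times> (real^'m)) set"
    and bet :: "'q \<Rightarrow> 'q"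
    and xs :: "'q \<Rightarrow> real^'n" and us :: "'q \<Rightarrow> real^'m"
    and ubar :: "'q \<Rightarrow> 'q \<Rightarrow> real^'m"
    and N :: nat
  assumes "stochastic_matrix P"
    and "well_posed P f ell Y"
    and "is_bet P bet"
    and "optimal_steady_states f ell Y xs us"
    and "controllable f Y bet xs ubar"
    and "N \<ge> 1"
    and "(x, \<theta>) \<in> XN P f Y bet xs N"
    and "optimal_policy P f ell Y bet xs N x \<theta> mu"
  shows "LV P f (Vopt P f ell Y bet xs N) (mu [\<theta>]) x \<theta>
           \<le> ellN P ell bet xs ubar N \<theta> - ell x (mu [\<theta>]) \<theta>"
proof -
  from assms(1) have Pnn: "\<forall>i j. 0 \<le> P i j" and Psum: "\<forall>i. (\<Sum>j\<in>UNIV. P i j) = 1"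
    by (auto simp: stochastic_matrix_def)
  from assms(2) have ellnn: "\<And>x u t. 0 \<le> ell x u t" by (auto simp: well_posed_def)
  from assms(5) have ctrl: "\<And>i j. (xs i, ubar i j) \<in> Y j \<and> f (xs i) (ubar i j) j = xs (bet j)"
    by (auto simp: controllable_def)
  obtain n where N: "N = Suc n" using assms(6) by (cases N) auto
  from assms(8) have feas: "feasible P f Y bet xs N x \<theta> mu"
    and Vx: "cost P f ell N x \<theta> mu = Vopt P f ell Y bet xs N x \<theta>"
    by (auto simp: optimal_policy_def)
  define x1 where "x1 = f x (mu [\<theta>]) \<theta>"
  define mu' where "mu' = (\<lambda>h::'q list. if length h < Suc n then mu (\<theta>#h) else ubar (bet ((\<theta>#h)!n)) (h!n))"
  define c where "c = (\<lambda>ws. \<Sum>k<N. ell (state f x mu ws k) (mu (take (Suc k) ws)) (ws ! k))"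
  define c' where "c' = (\<lambda>ws. \<Sum>k<N. ell (state f x1 mu' ws k) (mu' (take (Suc k) ws)) (ws ! k))"
  define T where "T = (\<lambda>ws::'q list. ell (xs (bet (ws ! (N - 1)))) (ubar (bet (ws ! (N - 1))) (ws ! N)) (ws ! N))"
  define G where "G = (\<lambda>ws. c (take N ws) - ell x (mu [\<theta>]) \<theta> + T ws)"
  have mu'_lt: "\<forall>h. length h < Suc n \<longrightarrow> mu' h = mu (\<theta>#h)" by (simp add: mu'_def)
  have st: "\<And>ws' k. length ws' = Suc n \<Longrightarrow> k < Suc n \<Longrightarrow>
      state f x1 mu' ws' k = state f x mu (\<theta> # take n ws') (Suc k)"
    unfolding x1_def by (rule state_shift[OF mu'_lt])
  have key: "c' ws' = G (\<theta>#ws') \<and>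
      (\<forall>k<N. (state f x1 mu' ws' k, mu' (take (Suc k) ws')) \<in> Y (ws' ! k))
      \<and> state f x1 mu' ws' N = xs (bet (ws' ! (N - 1)))"
    if ws': "ws' \<in> paths j N" and Pj: "P \<theta> j > 0" and pp: "path_prob P ws' > 0" for j ws'
  proof -
    define w0 where "w0 = \<theta> # take n ws'"
    have l: "length ws' = Suc n" and h0: "ws' ! 0 = j" using ws' N by (auto simp: paths_def)
    have w0p: "w0 \<in> paths \<theta> N" using l N by (simp add: paths_def w0_def)
    have ppc: "path_prob P (\<theta>#ws') > 0" 
    proof -
      have "ws' \<noteq> []" using l by auto
      then have "path_prob P (\<theta>#ws') = P \<theta> j * path_prob P ws'" using h0 by (simp add: pp_Cons)
      then show ?thesis using pp Pj by simp
    qed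
    have split: "\<theta>#ws' = w0 @ [ws' ! n]"
    proof -
      have "take (Suc n) ws' = take n ws' @ [ws' ! n]" using l by (intro take_Suc_conv_app_nth) simp
      moreover have "take (Suc n) ws' = ws'" using l by simp
      ultimately show ?thesis by (simp add: w0_def)
    qed
    have "path_prob P (\<theta>#ws') = path_prob P w0 * P (last w0) (ws' ! n)"
      unfolding split by (rule pp_snoc) (simp add: w0_def)
    then have ppw0: "path_prob P w0 > 0"
      using ppc pp_nonneg[OF Pnn, of w0] by (cases "path_prob P w0 = 0") auto
    from feas w0p ppw0 have F1: "\<forall>k<N. (state f x mu w0 k, mu (take (Suc k) w0)) \<in> Y (w0 ! k)"
      and F2: "state f x mu w0 N = xs (bet (w0 ! (N - 1)))"
      by (auto simp: feasible_def)
    have w0n: "w0 ! n = (\<theta>#ws') ! n" using l by (cases n) (auto simp: w0_def)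
    have stage: "ell (state f x1 mu' ws' k) (mu' (take (Suc k) ws')) (ws' ! k)
        = ell (state f x mu w0 (Suc k)) (mu (take (Suc (Suc k)) w0)) (w0 ! Suc k)"
      and stY: "(state f x1 mu' ws' k, mu' (take (Suc k) ws')) \<in> Y (ws' ! k)"
      if k: "k < n" for k
    proof -
      have a: "state f x1 mu' ws' k = state f x mu w0 (Suc k)" using st[OF l] k by (simp add: w0_def)
      have b: "mu' (take (Suc k) ws') = mu (take (Suc (Suc k)) w0)" using k l by (simp add: mu'_def w0_def)
      have c: "ws' ! k = w0 ! Suc k" using k by (simp add: w0_def)
      show "ell (state f x1 mu' ws' k) (mu' (take (Suc k) ws')) (ws' ! k)
        = ell (state f x mu w0 (Suc k)) (mu (take (Suc (Suc k)) w0)) (w0 ! Suc k)"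
        using a b c by simp
      show "(state f x1 mu' ws' k, mu' (take (Suc k) ws')) \<in> Y (ws' ! k)"
        using a b c F1 k N by auto
    qed
    have stn: "state f x1 mu' ws' n = xs (bet ((\<theta>#ws') ! n))"
      using st[OF l, of n] F2 N w0n by (simp add: w0_def)
    have mun: "mu' (take (Suc n) ws') = ubar (bet ((\<theta>#ws') ! n)) (ws' ! n)"
      using l by (simp add: mu'_def)
    have c'eq: "c' ws' = (\<Sum>k<n. ell (state f x mu w0 (Suc k)) (mu (take (Suc (Suc k)) w0)) (w0 ! Suc k))
        + T (\<theta>#ws')"
      unfolding c'_def N using stage stn mun by (simp add: T_def N)
    have ceq: "c (take N (\<theta>#ws')) = ell x (mu [\<theta>]) \<theta> +
        (\<Sum>k<n. ell (state f x mu w0 (Suc k)) (mu (take (Suc (Suc k)) w0)) (w0 ! Suc k))"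
    proof -
      have tw: "take (Suc n) (\<theta>#ws') = w0" by (simp add: w0_def)
      show ?thesis unfolding c_def N tw sum.lessThan_Suc_shift by (simp add: w0_def)
    qed
    have C1: "c' ws' = G (\<theta>#ws')" using c'eq ceq by (simp add: G_def)
    have C2: "\<forall>k<N. (state f x1 mu' ws' k, mu' (take (Suc k) ws')) \<in> Y (ws' ! k)"
    proof (intro allI impI)
      fix k assume "k < N"
      then consider "k < n" | "k = n" using N by linarith
      then show "(state f x1 mu' ws' k, mu' (take (Suc k) ws')) \<in> Y (ws' ! k)"
      proof cases
        case 1 then show ?thesis by (rule stY)
      next
        case 2 then show ?thesis using stn mun ctrl by simp
      qed
    qed
    have C3: "state f x1 mu' ws' N = xs (bet (ws' ! (N - 1)))"
      using stn mun ctrl N by simp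
    show ?thesis using C1 C2 C3 by blast
  qed
  have costnn: "\<And>y j m. 0 \<le> cost P f ell N y j m"
    unfolding cost_def
    by (intro sum_nonneg mult_nonneg_nonneg pp_nonneg[OF Pnn]) (simp add: ellnn)
  have Vle: "P \<theta> j * Vopt P f ell Y bet xs N x1 j \<le> P \<theta> j * cost P f ell N x1 j mu'" for j
  proof (cases "P \<theta> j > 0")
    case True
    have "feasible P f Y bet xs N x1 j mu'"
      unfolding feasible_def using key True by blast
    then have "Vopt P f ell Y bet xs N x1 j \<le> cost P f ell N x1 j mu'"
      unfolding Vopt_def
      by (intro cInf_lower) (auto intro: bdd_belowI[where m=0] simp: costnn)
    then show ?thesis using True by (simp add: mult_left_mono)
  next
    case False
    then have "P \<theta> j = 0" using Pnn[rule_format, of \<theta> j] by linarith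
    then show ?thesis by simp
  qed
  have costeq: "P \<theta> j * cost P f ell N x1 j mu'
      = P \<theta> j * (\<Sum>ws\<in>paths j N. path_prob P ws * G (\<theta>#ws))" for j
  proof (cases "P \<theta> j > 0")
    case True
    have "(\<Sum>ws\<in>paths j N. path_prob P ws * c' ws) = (\<Sum>ws\<in>paths j N. path_prob P ws * G (\<theta>#ws))"
    proof (rule sum.cong[OF refl])
      fix ws assume ws: "ws \<in> paths j N"
      show "path_prob P ws * c' ws = path_prob P ws * G (\<theta>#ws)"
      proof (cases "path_prob P ws > 0")
        case True
        then show ?thesis using key[OF ws \<open>P \<theta> j > 0\<close>] by simp
      next
        case False
        then have "path_prob P ws = 0" using pp_nonneg[OF Pnn, of ws] by simp
        then show ?thesis by simp
      qed
    qed
    then show ?thesis unfolding cost_def c'_def by simp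
  next
    case False
    then have "P \<theta> j = 0" using Pnn[rule_format, of \<theta> j] by linarith
    then show ?thesis by simp
  qed
  have N1: "N \<ge> 1" using N by simp
  have "(\<Sum>j\<in>UNIV. P \<theta> j * Vopt P f ell Y bet xs N x1 j)
      \<le> (\<Sum>j\<in>UNIV. P \<theta> j * cost P f ell N x1 j mu')"
    by (rule sum_mono) (rule Vle)
  also have "\<dots> = (\<Sum>j\<in>UNIV. P \<theta> j * (\<Sum>ws\<in>paths j N. path_prob P ws * G (\<theta>#ws)))"
    by (rule sum.cong[OF refl]) (rule costeq)
  also have "\<dots> = (\<Sum>ws\<in>paths \<theta> (Suc N). path_prob P ws * G ws)"
    by (rule sum_paths_Cons[OF N1, symmetric])
  also have "\<dots> = (\<Sum>ws\<in>paths \<theta> (Suc N). path_prob P ws * c (take N ws))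
      - ell x (mu [\<theta>]) \<theta> * (\<Sum>ws\<in>paths \<theta> (Suc N). path_prob P ws)
      + (\<Sum>ws\<in>paths \<theta> (Suc N). path_prob P ws * T ws)"
    unfolding G_def by (simp add: algebra_simps sum.distrib sum_subtractf sum_distrib_left sum_distrib_right)
  also have "\<dots> = cost P f ell N x \<theta> mu - ell x (mu [\<theta>]) \<theta> + ellN P ell bet xs ubar N \<theta>"
  proof -
    have "(\<Sum>ws\<in>paths \<theta> (Suc N). path_prob P ws * c (take N ws)) = (\<Sum>ws\<in>paths \<theta> N. path_prob P ws * c ws)"
      by (rule sum_paths_snoc[OF N1 Psum])
    moreover have "(\<Sum>ws\<in>paths \<theta> (Suc N). path_prob P ws) = 1"
      by (rule sum_pp_1) (use Psum in auto)
    ultimately show ?thesis unfolding cost_def ellN_def c_def T_def by simp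
  qed
  finally have "(\<Sum>j\<in>UNIV. P \<theta> j * Vopt P f ell Y bet xs N x1 j)
      \<le> cost P f ell N x \<theta> mu - ell x (mu [\<theta>]) \<theta> + ellN P ell bet xs ubar N \<theta>" .
  then show ?thesis unfolding LV_def x1_def using Vx by simp
qed

end
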